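(* Let $(N,\underline X)\in\aleph^{FGM*}$ with $E[N]<\infty$ and $E[X]<\infty$. Then $$E[S]=\sum_{(i_0,i_1)\in\{0,1\}^2}f_{I_0,I_1}(i_0,i_1)\,\mu_{N_{[1+i_0]}}\,\mu_{X_{[1+i_1]}},\qquad f_{I_0,I_1}(i_0,i_1)=\tfrac14\big(1+(-1)^{i_0+i_1}\theta_{01}\big),$$ equivalently $$E[S]=E[N]E[X]+\frac{\theta_{01}}{4}\big(\mu_{N_{[2]}}-\mu_{N_{[1]}}\big)\big(\mu_{X_{[2]}}-\mu_{X_{[1]}}\big).$$
   Context: Collective risk model (CRM): $N$ is a random variable with values in $\mathbb{N}_0$, cdf $F_N$, pmf $\gamma_N(n)=\Pr(N=n)$ and support $A_N=\{n:\gamma_N(n)>0\}$; $\underline X=\{X_j\}_{j\ge1}$ is a sequence of identically distributed strictly positive random variables with common cdf $F_X$ (generic copy $X$). The aggregate claim amount is $S=\sum_{j=1}^\infty X_j\mathbb{1}_{\{N\ge j\}}$. A $d$-variate FGM copula with parameters $\theta_{j_1\dots j_k}$ is $C(u_1,\dots,u_d)=\prod_{m=1}^d u_m\big(1+\sum_{k=2}^d\sum_{j_1<\dots<j_k}\theta_{j_1\dots j_k}\bar u_{j_1}\cdots\bar u_{j_k}\big)$, $\bar u=1-u$, with parameters such that $1+\sum_{k}\sum_{j_1<\dots<j_k}\theta_{j_1\dots j_k}\varepsilon_{j_1}\cdots\varepsilon_{j_k}\ge0$ for all $\varepsilon\in\{-1,1\}^d$. A CRM belongs to $\aleph^{FGM}$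 if for every $k\in\mathbb{N}_1$, $k\le\sup A_N$, $F_{N,X_1,\dots,X_k}(n,x_1,\dots,x_k)=C_k(F_N(n),F_X(x_1),\dots,F_X(x_k))$ for a $(k+1)$-variate FGM copula $C_k$ with coordinates indexed $0,\dots,k$ (index $0$ for $N$). It belongs to $\aleph^{FGM*}$ if in addition $(N,X_1,\dots,X_k)\overset d=(N,X_{\pi(1)},\dots,X_{\pi(k)})$ for all such $k$ and all permutations $\pi$; then $\theta_{0j}=\theta_{01}$, $\theta_{ij}=\theta_{12}$, $\theta_{0ij}=\theta_{012}$ for all $1\le i<j$. For a random variable $Y$, $Y_{[1]}$, $Y_{[2]}$ denote the minimum and maximum of two iid copies of $Y$, and $\mu_{Y_{[j]}}=E[Y_{[j]}]$. *)

theory Defs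
  imports "HOL-Probability.Probability" "HOL-Combinatorics.Permutations"
begin

text \<open>(d+1)-variate FGM copula with coordinates indexed 0..d; the parameter of the
  coordinate subset S (with card S >= 2) is th S.\<close>
definition fgm_copula :: "nat \<Rightarrow> (nat set \<Rightarrow> real) \<Rightarrow> (nat \<Rightarrow> real) \<Rightarrow> real" where
  "fgm_copula d th u =
     (\<Prod>m\<in>{0..d}. u m) *
     (1 + (\<Sum>S\<in>{S. S \<subseteq> {0..d} \<and> 2 \<le> card S}. th S * (\<Prod>j\<in>S. 1 - u j)))"

definition fgm_admissible :: "nat \<Rightarrow> (nat set \<Rightarrow> real) \<Rightarrow> bool" where
  "fgm_admissible d th \<longleftrightarrow>
     (\<forall>\<epsilon> :: nat \<Rightarrow> real. (\<forall>j\<in>{0..d}. \<epsilon> j \<in> {-1, 1}) \<longrightarrow>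
        0 \<le> 1 + (\<Sum>S\<in>{S. S \<subseteq> {0..d} \<and> 2 \<le> card S}. th S * (\<Prod>j\<in>S. \<epsilon> j)))"

definition mu_min :: "real measure \<Rightarrow> real" where
  "mu_min D = integral\<^sup>L (D \<Otimes>\<^sub>M D) (\<lambda>(x, y). min x y)"

definition mu_max :: "real measure \<Rightarrow> real" where
  "mu_max D = integral\<^sup>L (D \<Otimes>\<^sub>M D) (\<lambda>(x, y). max x y)"

end

theory Submission
  imports Defs
begin

lemma antimono_measurable:
  fixes g :: "real \<Rightarrow> real"
  assumes "\<And>x y. x \<le> y \<Longrightarrow> g y \<le> g x"
  shows "g \<in> borel_measurable borel"
proof -
  have "(\<lambda>x. - g x) \<in> borel_measurable borel"
    by (rule borel_measurable_mono) (auto simp: mono_def assms)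
  then have "(\<lambda>x. - (- g x)) \<in> borel_measurable borel" by measurable
  then show ?thesis by simp
qed

lemma layer_cake_nn:
  fixes f :: "'a \<Rightarrow> real"
  assumes sf: "sigma_finite_measure M" and f[measurable]: "f \<in> borel_measurable M"
    and nn: "\<And>\<omega>. \<omega> \<in> space M \<Longrightarrow> 0 \<le> f \<omega>"
  shows "(\<integral>\<^sup>+\<omega>. ennreal (f \<omega>) \<partial>M) =
     (\<integral>\<^sup>+x. ennreal (indicator {0..} x) * emeasure M {\<omega>\<in>space M. x < f \<omega>} \<partial>lborel)"
proof -
  interpret pair_sigma_finite M lborel
    by (simp add: pair_sigma_finite_def sf lborel.sigma_finite_measure_axioms)
  have meas: "(\<lambda>(\<omega>, x). indicator {0..<f \<omega>} x :: ennreal) \<in> borel_measurable (M \<Otimes>\<^sub>M lborel)"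
  proof -
    have "(\<lambda>p. if 0 \<le> snd p \<and> snd p < f (fst p) then 1 else 0 :: ennreal) \<in> borel_measurable (M \<Otimes>\<^sub>M lborel)"
      by measurable
    then show ?thesis
      by (rule measurable_cong[THEN iffD1, rotated]) (auto simp: indicator_def split: prod.splits)
  qed
  have "(\<integral>\<^sup>+\<omega>. ennreal (f \<omega>) \<partial>M) = (\<integral>\<^sup>+\<omega>. (\<integral>\<^sup>+x. indicator {0..<f \<omega>} x \<partial>lborel) \<partial>M)"
    by (rule nn_integral_cong) (simp add: nn)
  also have "\<dots> = (\<integral>\<^sup>+x. (\<integral>\<^sup>+\<omega>. indicator {0..<f \<omega>} x \<partial>M) \<partial>lborel)"
    using Fubini'[OF meas] by simp
  also have "\<dots> = (\<integral>\<^sup>+x. ennreal (indicator {0..} x) * emeasure M {\<omega>\<in>space M. x < f \<omega>} \<partial>lborel)"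
  proof (rule nn_integral_cong)
    fix x :: real
    have "(\<integral>\<^sup>+\<omega>. indicator {0..<f \<omega>} x \<partial>M) = (\<integral>\<^sup>+\<omega>. ennreal (indicator {0..} x) * indicator {\<omega>\<in>space M. x < f \<omega>} \<omega> \<partial>M)"
      by (rule nn_integral_cong) (auto simp: indicator_def)
    also have "\<dots> = ennreal (indicator {0..} x) * emeasure M {\<omega>\<in>space M. x < f \<omega>}"
      by (rule nn_integral_cmult_indicator) measurable
    finally show "(\<integral>\<^sup>+\<omega>. indicator {0..<f \<omega>} x \<partial>M) = ennreal (indicator {0..} x) * emeasure M {\<omega>\<in>space M. x < f \<omega>}" .
  qed
  finally show ?thesis .
qed

lemma layer_cake:
  fixes f :: "'a \<Rightarrow> real"
  assumes fm: "finite_measure M" and f[measurable]: "f \<in> borel_measurable M"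
    and nn: "\<And>\<omega>. \<omega> \<in> space M \<Longrightarrow> 0 \<le> f \<omega>" and int: "integrable M f"
  shows "integrable lborel (\<lambda>x. indicator {0..} x * measure M {\<omega>\<in>space M. x < f \<omega>})"
    "integral\<^sup>L M f = integral\<^sup>L lborel (\<lambda>x. indicator {0..} x * measure M {\<omega>\<in>space M. x < f \<omega>})"
proof -
  interpret finite_measure M by fact
  let ?g = "\<lambda>x. indicator {0..} x * measure M {\<omega>\<in>space M. x < f \<omega>}"
  have gm: "?g \<in> borel_measurable lborel"
  proof -
    have "(\<lambda>x. measure M {\<omega>\<in>space M. x < f \<omega>}) \<in> borel_measurable borel"
      by (rule antimono_measurable) (auto intro!: finite_measure_mono)
    then show ?thesis by simp
  qed
  have "(\<integral>\<^sup>+\<omega>. ennreal (f \<omega>) \<partial>M) =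
     (\<integral>\<^sup>+x. ennreal (indicator {0..} x) * emeasure M {\<omega>\<in>space M. x < f \<omega>} \<partial>lborel)"
    by (rule layer_cake_nn[OF sigma_finite_measure f nn])
  also have "\<dots> = (\<integral>\<^sup>+x. ennreal (?g x) \<partial>lborel)"
    by (rule nn_integral_cong) (auto simp: emeasure_eq_measure ennreal_mult' indicator_def)
  finally have eq1: "(\<integral>\<^sup>+\<omega>. ennreal (f \<omega>) \<partial>M) = (\<integral>\<^sup>+x. ennreal (?g x) \<partial>lborel)" .
  have "(\<integral>\<^sup>+\<omega>. ennreal (f \<omega>) \<partial>M) = ennreal (integral\<^sup>L M f)"
    using nn_integral_eq_integral[OF int] nn by (simp add: AE_I2)
  with eq1 have "(\<integral>\<^sup>+x. ennreal (?g x) \<partial>lborel) = ennreal (integral\<^sup>L M f)" by simp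
  then have "integrable lborel ?g \<and> integral\<^sup>L lborel ?g = integral\<^sup>L M f"
    by (subst nn_integral_eq_integrable[symmetric]) (auto simp: gm integral_nonneg_AE nn)
  then show "integrable lborel ?g" "integral\<^sup>L M f = integral\<^sup>L lborel ?g" by auto
qed

lemma nat_layer_cake_nn:
  fixes Y :: "'a \<Rightarrow> nat"
  assumes Y[measurable]: "Y \<in> measurable M (count_space UNIV)"
  shows "(\<integral>\<^sup>+\<omega>. ennreal (real (Y \<omega>)) \<partial>M) = (\<Sum>n. emeasure M {\<omega>\<in>space M. n < Y \<omega>})"
proof -
  have "(\<integral>\<^sup>+\<omega>. ennreal (real (Y \<omega>)) \<partial>M) = (\<integral>\<^sup>+\<omega>. (\<Sum>n. indicator {\<omega>\<in>space M. n < Y \<omega>} \<omega>) \<partial>M)"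
  proof (rule nn_integral_cong)
    fix \<omega> assume w: "\<omega> \<in> space M"
    have "(\<Sum>n. indicator {\<omega>\<in>space M. n < Y \<omega>} \<omega> :: ennreal) = (\<Sum>n\<in>{..<Y \<omega>}. indicator {\<omega>\<in>space M. n < Y \<omega>} \<omega>)"
      by (rule suminf_finite) (auto simp: indicator_def)
    also have "\<dots> = (\<Sum>n\<in>{..<Y \<omega>}. 1)" using w by (intro sum.cong) auto
    finally show "ennreal (real (Y \<omega>)) = (\<Sum>n. indicator {\<omega>\<in>space M. n < Y \<omega>} \<omega>)"
      by (simp add: ennreal_of_nat_eq_real_of_nat)
  qed
  also have "\<dots> = (\<Sum>n. emeasure M {\<omega>\<in>space M. n < Y \<omega>})"
    by (subst nn_integral_suminf) auto
  finally show ?thesis .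
qed

lemma nat_layer_cake:
  fixes Y :: "'a \<Rightarrow> nat"
  assumes fm: "finite_measure M" and Y[measurable]: "Y \<in> measurable M (count_space UNIV)"
  shows "integrable M (\<lambda>\<omega>. real (Y \<omega>)) \<longleftrightarrow> summable (\<lambda>n. measure M {\<omega>\<in>space M. n < Y \<omega>})"
    and "summable (\<lambda>n. measure M {\<omega>\<in>space M. n < Y \<omega>}) \<Longrightarrow>
         integral\<^sup>L M (\<lambda>\<omega>. real (Y \<omega>)) = (\<Sum>n. measure M {\<omega>\<in>space M. n < Y \<omega>})"
proof -
  interpret finite_measure M by fact
  have eq: "(\<integral>\<^sup>+\<omega>. ennreal (real (Y \<omega>)) \<partial>M) = (\<Sum>n. ennreal (measure M {\<omega>\<in>space M. n < Y \<omega>}))"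
    unfolding nat_layer_cake_nn[OF Y] by (simp add: emeasure_eq_measure)
  have A: "summable (\<lambda>n. measure M {\<omega>\<in>space M. n < Y \<omega>}) \<Longrightarrow>
         integrable M (\<lambda>\<omega>. real (Y \<omega>)) \<and> integral\<^sup>L M (\<lambda>\<omega>. real (Y \<omega>)) = (\<Sum>n. measure M {\<omega>\<in>space M. n < Y \<omega>})"
    by (subst nn_integral_eq_integrable[symmetric]) (auto simp: eq suminf_ennreal2 suminf_nonneg)
  show "summable (\<lambda>n. measure M {\<omega>\<in>space M. n < Y \<omega>}) \<Longrightarrow>
         integral\<^sup>L M (\<lambda>\<omega>. real (Y \<omega>)) = (\<Sum>n. measure M {\<omega>\<in>space M. n < Y \<omega>})"
    using A by auto
  show "integrable M (\<lambda>\<omega>. real (Y \<omega>)) \<longleftrightarrow> summable (\<lambda>n. measure M {\<omega>\<in>space M. n < Y \<omega>})"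
  proof
    assume "integrable M (\<lambda>\<omega>. real (Y \<omega>))"
    then have "(\<integral>\<^sup>+\<omega>. ennreal (real (Y \<omega>)) \<partial>M) \<noteq> top"
      by (simp add: nn_integral_eq_integral)
    then show "summable (\<lambda>n. measure M {\<omega>\<in>space M. n < Y \<omega>})"
      by (intro summable_suminf_not_top) (auto simp: eq)
  qed (use A in auto)
qed

lemma layer_cake':
  fixes f :: "'a \<Rightarrow> real"
  assumes fm: "finite_measure M" and f[measurable]: "f \<in> borel_measurable M"
    and nn: "\<And>\<omega>. \<omega> \<in> space M \<Longrightarrow> 0 \<le> f \<omega>"
    and int: "integrable lborel (\<lambda>x. indicator {0..} x * measure M {\<omega>\<in>space M. x < f \<omega>})"
  shows "integrable M f"
proof -
  interpret finite_measure M by fact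
  let ?g = "\<lambda>x. indicator {0..} x * measure M {\<omega>\<in>space M. x < f \<omega>}"
  have "(\<integral>\<^sup>+\<omega>. ennreal (f \<omega>) \<partial>M) =
     (\<integral>\<^sup>+x. ennreal (indicator {0..} x) * emeasure M {\<omega>\<in>space M. x < f \<omega>} \<partial>lborel)"
    by (rule layer_cake_nn[OF sigma_finite_measure f nn])
  also have "\<dots> = (\<integral>\<^sup>+x. ennreal (?g x) \<partial>lborel)"
    by (rule nn_integral_cong) (auto simp: emeasure_eq_measure ennreal_mult' indicator_def)
  also have "\<dots> = ennreal (integral\<^sup>L lborel ?g)"
    by (rule nn_integral_eq_integral[OF int]) auto
  finally show ?thesis
    by (subst (asm) nn_integral_eq_integrable) (auto simp: nn integral_nonneg_AE)
qed

lemma prod_sq: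
  assumes "prob_space M" "A \<in> sets M"
  shows "measure (M \<Otimes>\<^sub>M M) (A \<times> A) = measure M A ^ 2"
proof -
  interpret prob_space M by fact
  have "emeasure (M \<Otimes>\<^sub>M M) (A \<times> A) = emeasure M A * emeasure M A"
    by (rule emeasure_pair_measure_Times) (use assms in auto)
  then show ?thesis
    by (simp add: measure_def power2_eq_square enn2real_mult)
qed

lemma mu_prod:
  fixes f :: "'a \<Rightarrow> real"
  assumes "prob_space M" and f[measurable]: "f \<in> borel_measurable M"
  shows "mu_max (distr M borel f) = integral\<^sup>L (M \<Otimes>\<^sub>M M) (\<lambda>p. max (f (fst p)) (f (snd p)))"
    "mu_min (distr M borel f) = integral\<^sup>L (M \<Otimes>\<^sub>M M) (\<lambda>p. min (f (fst p)) (f (snd p)))"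
proof -
  interpret prob_space M by fact
  have sf: "sigma_finite_measure (distr M borel f)"
    using prob_space_distr[OF f] by (simp add: prob_space_imp_sigma_finite)
  have D: "distr M borel f \<Otimes>\<^sub>M distr M borel f = distr (M \<Otimes>\<^sub>M M) (borel \<Otimes>\<^sub>M borel) (\<lambda>(x, y). (f x, f y))"
    by (rule pair_measure_distr[OF f f sf])
  have m: "(\<lambda>(x, y). (f x, f y)) \<in> measurable (M \<Otimes>\<^sub>M M) (borel \<Otimes>\<^sub>M borel)"
    by measurable
  show "mu_max (distr M borel f) = integral\<^sup>L (M \<Otimes>\<^sub>M M) (\<lambda>p. max (f (fst p)) (f (snd p)))"
    unfolding mu_max_def D
    by (subst integral_distr[OF m]) (auto simp: case_prod_beta)
  show "mu_min (distr M borel f) = integral\<^sup>L (M \<Otimes>\<^sub>M M) (\<lambda>p. min (f (fst p)) (f (snd p)))"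
    unfolding mu_min_def D
    by (subst integral_distr[OF m]) (auto simp: case_prod_beta)
qed

lemma exch_step:
  fixes N :: "'a \<Rightarrow> nat" and X :: "nat \<Rightarrow> 'a \<Rightarrow> real"
  assumes N[measurable]: "N \<in> measurable M (count_space UNIV)"
    and X_meas: "\<And>j. j \<ge> 1 \<Longrightarrow> X j \<in> borel_measurable M"
    and ex: "\<And>\<pi>. \<pi> permutes {1..Suc n} \<Longrightarrow>
        distr M (count_space UNIV \<Otimes>\<^sub>M PiM {1..Suc n} (\<lambda>_. borel))
             (\<lambda>\<omega>. (N \<omega>, \<lambda>i\<in>{1..Suc n}. X (\<pi> i) \<omega>))
      = distr M (count_space UNIV \<Otimes>\<^sub>M PiM {1..Suc n} (\<lambda>_. borel))
             (\<lambda>\<omega>. (N \<omega>, \<lambda>i\<in>{1..Suc n}. X i \<omega>))"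
  shows "(\<integral>\<^sup>+\<omega>. ennreal (if n < N \<omega> then X (Suc n) \<omega> else 0) \<partial>M)
       = (\<integral>\<^sup>+\<omega>. ennreal (if n < N \<omega> then X 1 \<omega> else 0) \<partial>M)"
proof -
  let ?K = "{1..Suc n}"
  let ?S = "count_space UNIV \<Otimes>\<^sub>M PiM ?K (\<lambda>_. borel) :: (nat \<times> (nat \<Rightarrow> real)) measure"
  let ?h = "\<lambda>p::nat \<times> (nat \<Rightarrow> real). ennreal (if n < fst p then snd p (Suc n) else 0)"
  have hm: "?h \<in> borel_measurable ?S"
  proof -
    have c: "(\<lambda>p::nat \<times> (nat \<Rightarrow> real). snd p (Suc n)) \<in> borel_measurable ?S"
      by (rule measurable_compose[OF measurable_snd measurable_component_singleton]) auto
    have f: "(\<lambda>p::nat \<times> (nat \<Rightarrow> real). fst p) \<in> measurable ?S (count_space UNIV)"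
      by (rule measurable_fst)
    show ?thesis using c f by measurable
  qed
  define \<pi> where "\<pi> = Transposition.transpose (1::nat) (Suc n)"
  have perm: "\<pi> permutes ?K" unfolding \<pi>_def by (rule permutes_swap_id) auto
  have mm: "(\<lambda>\<omega>. (N \<omega>, \<lambda>i\<in>?K. X (\<rho> i) \<omega>)) \<in> measurable M ?S" if r: "\<And>i. i \<in> ?K \<Longrightarrow> \<rho> i \<ge> 1" for \<rho>
  proof (rule measurable_Pair)
    show "N \<in> measurable M (count_space UNIV)" by (rule N)
    show "(\<lambda>\<omega>. \<lambda>i\<in>?K. X (\<rho> i) \<omega>) \<in> measurable M (PiM ?K (\<lambda>_. borel))"
      by (rule measurable_restrict) (use r X_meas in auto)
  qed
  have pi1: "\<pi> (Suc n) = 1" by (simp add: \<pi>_def Transposition.transpose_def)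
  have m1: "(\<lambda>\<omega>. (N \<omega>, \<lambda>i\<in>?K. X (\<pi> i) \<omega>)) \<in> measurable M ?S"
    by (rule mm) (auto simp: \<pi>_def Transposition.transpose_def)
  have m2: "(\<lambda>\<omega>. (N \<omega>, \<lambda>i\<in>?K. X i \<omega>)) \<in> measurable M ?S"
    using mm[of id] by simp
  have "(\<integral>\<^sup>+\<omega>. ennreal (if n < N \<omega> then X 1 \<omega> else 0) \<partial>M)
      = (\<integral>\<^sup>+\<omega>. ?h (N \<omega>, \<lambda>i\<in>?K. X (\<pi> i) \<omega>) \<partial>M)"
    using pi1 by (intro nn_integral_cong) simp
  also have "\<dots> = integral\<^sup>N (distr M ?S (\<lambda>\<omega>. (N \<omega>, \<lambda>i\<in>?K. X (\<pi> i) \<omega>))) ?h"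
    by (rule nn_integral_distr[OF m1, symmetric]) (use hm in simp)
  also have "\<dots> = integral\<^sup>N (distr M ?S (\<lambda>\<omega>. (N \<omega>, \<lambda>i\<in>?K. X i \<omega>))) ?h"
    by (simp only: ex[OF perm])
  also have "\<dots> = (\<integral>\<^sup>+\<omega>. ?h (N \<omega>, \<lambda>i\<in>?K. X i \<omega>) \<partial>M)"
    by (rule nn_integral_distr[OF m2]) (use hm in simp)
  also have "\<dots> = (\<integral>\<^sup>+\<omega>. ennreal (if n < N \<omega> then X (Suc n) \<omega> else 0) \<partial>M)"
    by (intro nn_integral_cong) simp
  finally show ?thesis by simp
qed

lemma subsets_card2: "{S. S \<subseteq> {0..1::nat} \<and> 2 \<le> card S} = {{0,1}}"
proof (intro set_eqI iffI)
  fix S assume "S \<in> {S. S \<subseteq> {0..1::nat} \<and> 2 \<le> card S}"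
  then have S: "S \<subseteq> {0,1}" "2 \<le> card S" by auto
  have "S = {0,1}"
  proof (rule ccontr)
    assume "S \<noteq> {0,1}"
    then have "S \<subset> {0,1}" using S by auto
    then have "card S < card {0,1::nat}" by (intro psubset_card_mono) auto
    then show False using S by simp
  qed
  then show "S \<in> {{0,1}}" by simp
qed auto

lemma fgm1: "fgm_copula 1 th u = u 0 * u 1 * (1 + th {0,1} * ((1 - u 0) * (1 - u 1)))"
  unfolding fgm_copula_def subsets_card2 by (simp add: atLeastAtMost_singleton insert_commute)

lemma fgm_tail:
  fixes N :: "'a \<Rightarrow> nat" and X :: "'a \<Rightarrow> real"
  assumes "prob_space M" and N[measurable]: "N \<in> measurable M (count_space UNIV)"
    and X[measurable]: "X \<in> borel_measurable M"
    and H: "\<And>t x. measure M {\<omega>\<in>space M. real (N \<omega>) \<le> t \<and> X \<omega> \<le> x}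
        = measure M {\<omega>\<in>space M. real (N \<omega>) \<le> t} * measure M {\<omega>\<in>space M. X \<omega> \<le> x} *
          (1 + th * ((1 - measure M {\<omega>\<in>space M. real (N \<omega>) \<le> t}) * (1 - measure M {\<omega>\<in>space M. X \<omega> \<le> x})))"
  shows "measure M {\<omega>\<in>space M. x < X \<omega> \<and> n < N \<omega>} =
     (1 - measure M {\<omega>\<in>space M. N \<omega> \<le> n}) * (1 - measure M {\<omega>\<in>space M. X \<omega> \<le> x}) *
     (1 + th * measure M {\<omega>\<in>space M. N \<omega> \<le> n} * measure M {\<omega>\<in>space M. X \<omega> \<le> x})"
proof -
  interpret prob_space M by fact
  let ?A = "{\<omega>\<in>space M. N \<omega> \<le> n}" and ?B = "{\<omega>\<in>space M. X \<omega> \<le> x}"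
  have A: "?A \<in> sets M" and B: "?B \<in> sets M" by measurable
  have eqA: "{\<omega>\<in>space M. real (N \<omega>) \<le> real n} = ?A" by auto
  have eqAB: "{\<omega>\<in>space M. real (N \<omega>) \<le> real n \<and> X \<omega> \<le> x} = ?A \<inter> ?B" by auto
  have H': "prob (?A \<inter> ?B) = prob ?A * prob ?B * (1 + th * ((1 - prob ?A) * (1 - prob ?B)))"
    using H[of "real n" x] unfolding eqA eqAB .
  have "{\<omega>\<in>space M. x < X \<omega> \<and> n < N \<omega>} = space M - (?A \<union> ?B)" by auto
  then have "prob {\<omega>\<in>space M. x < X \<omega> \<and> n < N \<omega>} = 1 - prob (?A \<union> ?B)"
    using prob_compl[of "?A \<union> ?B"] A B by auto
  also have "prob (?A \<union> ?B) = prob ?A + prob ?B - prob (?A \<inter> ?B)"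
    using finite_measure_Union'[OF A B] finite_measure_Diff'[OF A B]
    by (smt (verit) A B Diff_Int2 Int_absorb Int_commute Int_lower1 finite_measure_Diff sets.Int)
  finally show ?thesis unfolding H' by (simp add: algebra_simps)
qed

lemma sq1: assumes "0 \<le> (a::real)" "a \<le> 1" shows "\<bar>1 - a^2\<bar> \<le> 2*(1-a)"
proof -
  have e: "1 - a^2 = (1-a)*(1+a)" by (simp add: algebra_simps power2_eq_square)
  have "(1-a)*(1+a) \<le> (1-a)*2" by (rule mult_left_mono) (use assms in auto)
  moreover have "0 \<le> (1-a)*(1+a)" using assms by auto
  ultimately show ?thesis unfolding e by simp
qed
lemma sq2: assumes "0 \<le> (a::real)" "a \<le> 1" shows "\<bar>(1 - a)^2\<bar> \<le> 1-a"
proof -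
  have "(1-a)*(1-a) \<le> (1-a)*1" by (rule mult_left_mono) (use assms in auto)
  then show ?thesis by (simp add: power2_eq_square)
qed
lemma sq3: assumes "0 \<le> (a::real)" "a \<le> 1" shows "\<bar>a*(1-a)\<bar> \<le> 1-a"
proof -
  have "a*(1-a) \<le> 1*(1-a)" by (rule mult_right_mono) (use assms in auto)
  moreover have "0 \<le> a*(1-a)" using assms by auto
  ultimately show ?thesis by simp
qed

theorem mainTheorem8:
  fixes M :: "'a measure" and N :: "'a \<Rightarrow> nat" and X :: "nat \<Rightarrow> 'a \<Rightarrow> real"
    and \<theta> :: "nat \<Rightarrow> nat set \<Rightarrow> real"
  assumes prob: "prob_space M"
    and N_meas: "N \<in> measurable M (count_space UNIV)"
    and X_meas: "\<And>j. j \<ge> 1 \<Longrightarrow> X j \<in> borel_measurable M"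
    and X_pos: "\<And>j \<omega>. j \<ge> 1 \<Longrightarrow> \<omega> \<in> space M \<Longrightarrow> X j \<omega> > 0"
    and X_ident: "\<And>j. j \<ge> 1 \<Longrightarrow> distr M borel (X j) = distr M borel (X 1)"
    and FGM: "\<And>k. k \<ge> 1 \<Longrightarrow> (\<exists>n. k \<le> n \<and> measure M {\<omega>\<in>space M. N \<omega> = n} > 0) \<Longrightarrow>
        fgm_admissible k (\<theta> k) \<and>
        (\<forall>(t::real) (x::nat \<Rightarrow> real).
           measure M {\<omega>\<in>space M. real (N \<omega>) \<le> t \<and> (\<forall>j\<in>{1..k}. X j \<omega> \<le> x j)}
         = fgm_copula k (\<theta> k)
             (\<lambda>m. if m = 0 then measure M {\<omega>\<in>space M. real (N \<omega>) \<le> t}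
                  else measure M {\<omega>\<in>space M. X 1 \<omega> \<le> x m}))"
    and exch: "\<And>k \<pi>. k \<ge> 1 \<Longrightarrow> (\<exists>n. k \<le> n \<and> measure M {\<omega>\<in>space M. N \<omega> = n} > 0) \<Longrightarrow>
        \<pi> permutes {1..k} \<Longrightarrow>
        distr M (count_space UNIV \<Otimes>\<^sub>M PiM {1..k} (\<lambda>_. borel))
             (\<lambda>\<omega>. (N \<omega>, \<lambda>i\<in>{1..k}. X (\<pi> i) \<omega>))
      = distr M (count_space UNIV \<Otimes>\<^sub>M PiM {1..k} (\<lambda>_. borel))
             (\<lambda>\<omega>. (N \<omega>, \<lambda>i\<in>{1..k}. X i \<omega>))"
    and N_int: "integrable M (\<lambda>\<omega>. real (N \<omega>))"
    and X_int: "integrable M (X 1)"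
  shows "(let DN = distr M borel (\<lambda>\<omega>. real (N \<omega>)); DX = distr M borel (X 1);
             ES = integral\<^sup>L M (\<lambda>\<omega>. \<Sum>j\<in>{1..N \<omega>}. X j \<omega>) in
          ES = (\<Sum>i0\<in>{0::nat,1}. \<Sum>i1\<in>{0::nat,1}.
                  (1 + (-1) ^ (i0 + i1) * \<theta> 1 {0,1}) / 4
                  * (if i0 = 0 then mu_min DN else mu_max DN)
                  * (if i1 = 0 then mu_min DX else mu_max DX))
        \<and> ES = integral\<^sup>L M (\<lambda>\<omega>. real (N \<omega>)) * integral\<^sup>L M (X 1)
              + \<theta> 1 {0,1} / 4 * (mu_max DN - mu_min DN) * (mu_max DX - mu_min DX))"
proof -
  interpret P: prob_space M by (rule prob)
  have probMM: "prob_space (M \<Otimes>\<^sub>M M)" by (rule prob_space_pair[OF prob prob])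
  interpret MM: prob_space "M \<Otimes>\<^sub>M M" by (rule probMM)
  note N_meas[measurable]
  have X1[measurable]: "X 1 \<in> borel_measurable M" using X_meas by simp
  have X1nn: "\<And>\<omega>. \<omega> \<in> space M \<Longrightarrow> 0 \<le> X 1 \<omega>" using X_pos by (simp add: less_imp_le)
  have X1'[measurable]: "X (Suc 0) \<in> borel_measurable M" using X_meas by simp
  define F where "F n = measure M {\<omega>\<in>space M. N \<omega> \<le> n}" for n
  define G where "G x = measure M {\<omega>\<in>space M. X 1 \<omega> \<le> x}" for x
  define th where "th = \<theta> 1 {0,1}"
  define muX where "muX = integral\<^sup>L M (X 1)"
  define muN where "muN = integral\<^sup>L M (\<lambda>\<omega>. real (N \<omega>))"
  define DN where "DN = distr M borel (\<lambda>\<omega>. real (N \<omega>))"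
  define DX where "DX = distr M borel (X 1)"
  have F01: "0 \<le> F n" "F n \<le> 1" for n unfolding F_def by auto
  have G01: "0 \<le> G x" "G x \<le> 1" for x unfolding G_def by auto
  have Gmono: "G x \<le> G y" if "x \<le> y" for x y
    unfolding G_def using that by (intro P.finite_measure_mono) auto
  have Gm[measurable]: "G \<in> borel_measurable borel"
    by (rule borel_measurable_mono) (auto simp: mono_def Gmono)
  have tailN: "measure M {\<omega>\<in>space M. n < N \<omega>} = 1 - F n" for n
  proof -
    have "{\<omega>\<in>space M. n < N \<omega>} = space M - {\<omega>\<in>space M. N \<omega> \<le> n}" by auto
    then show ?thesis unfolding F_def by (simp add: P.prob_compl)
  qed
  have tailX: "measure M {\<omega>\<in>space M. x < X 1 \<omega>} = 1 - G x" for x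
  proof -
    have "{\<omega>\<in>space M. x < X 1 \<omega>} = space M - {\<omega>\<in>space M. X 1 \<omega> \<le> x}" by auto
    then show ?thesis unfolding G_def by (simp add: P.prob_compl)
  qed
  have spMM: "space (M \<Otimes>\<^sub>M M) = space M \<times> space M" by (simp add: space_pair_measure)
  have sumN: "summable (\<lambda>n. 1 - F n)" and muN_eq: "muN = (\<Sum>n. 1 - F n)"
    using nat_layer_cake[OF P.finite_measure_axioms N_meas] N_int unfolding muN_def tailN by auto
  have Ymax[measurable]: "(\<lambda>p. max (N (fst p)) (N (snd p))) \<in> measurable (M \<Otimes>\<^sub>M M) (count_space UNIV)"
    by measurable
  have Ymin[measurable]: "(\<lambda>p. min (N (fst p)) (N (snd p))) \<in> measurable (M \<Otimes>\<^sub>M M) (count_space UNIV)"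
    by measurable
  have tailmaxN: "measure (M \<Otimes>\<^sub>M M) {p\<in>space (M \<Otimes>\<^sub>M M). n < max (N (fst p)) (N (snd p))} = 1 - F n ^ 2" for n
  proof -
    let ?A = "{\<omega>\<in>space M. N \<omega> \<le> n}"
    have "{p\<in>space (M \<Otimes>\<^sub>M M). n < max (N (fst p)) (N (snd p))} = space (M \<Otimes>\<^sub>M M) - ?A \<times> ?A"
      by (auto simp: spMM)
    moreover have "?A \<times> ?A \<in> sets (M \<Otimes>\<^sub>M M)" by measurable
    ultimately show ?thesis
      using prod_sq[OF prob, of ?A] by (simp add: MM.prob_compl F_def)
  qed
  have tailminN: "measure (M \<Otimes>\<^sub>M M) {p\<in>space (M \<Otimes>\<^sub>M M). n < min (N (fst p)) (N (snd p))} = (1 - F n) ^ 2" for n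
  proof -
    let ?B = "{\<omega>\<in>space M. n < N \<omega>}"
    have "{p\<in>space (M \<Otimes>\<^sub>M M). n < min (N (fst p)) (N (snd p))} = ?B \<times> ?B"
      by (auto simp: spMM)
    then show ?thesis
      using prod_sq[OF prob, of ?B] by (simp add: tailN)
  qed
  have sumN2: "summable (\<lambda>n. 1 - F n ^ 2)"
  proof (rule summable_comparison_test'[where g="\<lambda>n. 2 * (1 - F n)"])
    show "summable (\<lambda>n. 2 * (1 - F n))" using sumN by (rule summable_mult)
  qed (use F01 sq1 in auto)
  have sumN3: "summable (\<lambda>n. (1 - F n) ^ 2)"
    by (rule summable_comparison_test'[OF sumN]) (use F01 sq2 in auto)
  have sumN4: "summable (\<lambda>n. F n * (1 - F n))"
    by (rule summable_comparison_test'[OF sumN]) (use F01 sq3 in auto)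
  have maxN: "mu_max DN = (\<Sum>n. 1 - F n ^ 2)"
  proof -
    have "mu_max DN = integral\<^sup>L (M \<Otimes>\<^sub>M M) (\<lambda>p. real (max (N (fst p)) (N (snd p))))"
      unfolding DN_def mu_prod(1)[OF prob, of "\<lambda>\<omega>. real (N \<omega>)", simplified] by (simp add: of_nat_max)
    also have "\<dots> = (\<Sum>n. 1 - F n ^ 2)"
      using nat_layer_cake(2)[OF MM.finite_measure_axioms Ymax] sumN2 unfolding tailmaxN by simp
    finally show ?thesis .
  qed
  have minN: "mu_min DN = (\<Sum>n. (1 - F n) ^ 2)"
  proof -
    have "mu_min DN = integral\<^sup>L (M \<Otimes>\<^sub>M M) (\<lambda>p. real (min (N (fst p)) (N (snd p))))"
      unfolding DN_def mu_prod(2)[OF prob, of "\<lambda>\<omega>. real (N \<omega>)", simplified] by (simp add: of_nat_min)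
    also have "\<dots> = (\<Sum>n. (1 - F n) ^ 2)"
      using nat_layer_cake(2)[OF MM.finite_measure_axioms Ymin] sumN3 unfolding tailminN by simp
    finally show ?thesis .
  qed
  define iX where "iX x = (indicator {0..} x :: real)" for x :: real
  have iXm[measurable]: "iX \<in> borel_measurable borel" unfolding iX_def by measurable
  have intX: "integrable lborel (\<lambda>x. iX x * (1 - G x))" and muX_eq: "muX = integral\<^sup>L lborel (\<lambda>x. iX x * (1 - G x))"
    using layer_cake[OF P.finite_measure_axioms X1 X1nn X_int] unfolding muX_def tailX iX_def by auto
  have tailmaxX: "measure (M \<Otimes>\<^sub>M M) {p\<in>space (M \<Otimes>\<^sub>M M). x < max (X 1 (fst p)) (X 1 (snd p))} = 1 - G x ^ 2" for x
  proof -
    let ?A = "{\<omega>\<in>space M. X 1 \<omega> \<le> x}"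
    have "{p\<in>space (M \<Otimes>\<^sub>M M). x < max (X 1 (fst p)) (X 1 (snd p))} = space (M \<Otimes>\<^sub>M M) - ?A \<times> ?A"
      by (auto simp: spMM)
    moreover have "?A \<times> ?A \<in> sets (M \<Otimes>\<^sub>M M)" by measurable
    ultimately show ?thesis
      using prod_sq[OF prob, of ?A] by (simp add: MM.prob_compl G_def)
  qed
  have tailminX: "measure (M \<Otimes>\<^sub>M M) {p\<in>space (M \<Otimes>\<^sub>M M). x < min (X 1 (fst p)) (X 1 (snd p))} = (1 - G x) ^ 2" for x
  proof -
    let ?B = "{\<omega>\<in>space M. x < X 1 \<omega>}"
    have "{p\<in>space (M \<Otimes>\<^sub>M M). x < min (X 1 (fst p)) (X 1 (snd p))} = ?B \<times> ?B"
      by (auto simp: spMM)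
    then show ?thesis
      using prod_sq[OF prob, of ?B] tailX[of x] by simp
  qed
  have intX2: "integrable lborel (\<lambda>x. iX x * (1 - G x ^ 2))"
  proof (rule Bochner_Integration.integrable_bound[where f="\<lambda>x. 2 * (iX x * (1 - G x))"])
    show "integrable lborel (\<lambda>x. 2 * (iX x * (1 - G x)))" using intX by simp
    show "AE x in lborel. norm (iX x * (1 - G x ^ 2)) \<le> norm (2 * (iX x * (1 - G x)))"
      using sq1[OF G01] G01 by (auto simp: iX_def indicator_def)
  qed measurable
  have intX3: "integrable lborel (\<lambda>x. iX x * (1 - G x) ^ 2)"
  proof (rule Bochner_Integration.integrable_bound[where f="\<lambda>x. iX x * (1 - G x)"])
    show "integrable lborel (\<lambda>x. iX x * (1 - G x))" using intX by simp
    show "AE x in lborel. norm (iX x * (1 - G x) ^ 2) \<le> norm (iX x * (1 - G x))"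
      using sq2[OF G01] G01 by (auto simp: iX_def indicator_def)
  qed measurable
  have maxXm[measurable]: "(\<lambda>p. max (X 1 (fst p)) (X 1 (snd p))) \<in> borel_measurable (M \<Otimes>\<^sub>M M)" by measurable
  have minXm[measurable]: "(\<lambda>p. min (X 1 (fst p)) (X 1 (snd p))) \<in> borel_measurable (M \<Otimes>\<^sub>M M)" by measurable
  have maxX: "mu_max DX = integral\<^sup>L lborel (\<lambda>x. iX x * (1 - G x ^ 2))"
  proof -
    have nn: "\<And>p. p \<in> space (M \<Otimes>\<^sub>M M) \<Longrightarrow> 0 \<le> max (X 1 (fst p)) (X 1 (snd p))"
      using X_pos by (force simp: spMM)
    have i: "integrable (M \<Otimes>\<^sub>M M) (\<lambda>p. max (X 1 (fst p)) (X 1 (snd p)))"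
      by (rule layer_cake'[OF MM.finite_measure_axioms maxXm nn]) (use intX2 in \<open>unfold tailmaxX iX_def, simp\<close>)
    have "mu_max DX = integral\<^sup>L (M \<Otimes>\<^sub>M M) (\<lambda>p. max (X 1 (fst p)) (X 1 (snd p)))"
      unfolding DX_def by (rule mu_prod(1)[OF prob X1])
    also have "\<dots> = integral\<^sup>L lborel (\<lambda>x. indicator {0..} x * measure (M \<Otimes>\<^sub>M M) {p\<in>space (M \<Otimes>\<^sub>M M). x < max (X 1 (fst p)) (X 1 (snd p))})"
      by (rule layer_cake(2)[OF MM.finite_measure_axioms maxXm nn i])
    also have "\<dots> = integral\<^sup>L lborel (\<lambda>x. iX x * (1 - G x ^ 2))"
      unfolding tailmaxX iX_def ..
    finally show ?thesis .
  qed
  have minX: "mu_min DX = integral\<^sup>L lborel (\<lambda>x. iX x * (1 - G x) ^ 2)"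
  proof -
    have nn: "\<And>p. p \<in> space (M \<Otimes>\<^sub>M M) \<Longrightarrow> 0 \<le> min (X 1 (fst p)) (X 1 (snd p))"
      using X_pos by (force simp: spMM)
    have i: "integrable (M \<Otimes>\<^sub>M M) (\<lambda>p. min (X 1 (fst p)) (X 1 (snd p)))"
      by (rule layer_cake'[OF MM.finite_measure_axioms minXm nn]) (use intX3 in \<open>unfold tailminX iX_def, simp\<close>)
    have "mu_min DX = integral\<^sup>L (M \<Otimes>\<^sub>M M) (\<lambda>p. min (X 1 (fst p)) (X 1 (snd p)))"
      unfolding DX_def by (rule mu_prod(2)[OF prob X1])
    also have "\<dots> = integral\<^sup>L lborel (\<lambda>x. indicator {0..} x * measure (M \<Otimes>\<^sub>M M) {p\<in>space (M \<Otimes>\<^sub>M M). x < min (X 1 (fst p)) (X 1 (snd p))})"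
      by (rule layer_cake(2)[OF MM.finite_measure_axioms minXm nn i])
    also have "\<dots> = integral\<^sup>L lborel (\<lambda>x. iX x * ((1 - G x) ^ 2))"
      unfolding tailminX iX_def ..
    finally show ?thesis .
  qed
  have pos_exists: "\<exists>m>n. 0 < measure M {\<omega>\<in>space M. N \<omega> = m}"
    if pos: "0 < measure M {\<omega>\<in>space M. n < N \<omega>}" for n
  proof (rule ccontr)
    assume "\<not> (\<exists>m>n. 0 < measure M {\<omega>\<in>space M. N \<omega> = m})"
    then have z: "measure M {\<omega>\<in>space M. N \<omega> = m} = 0" if "n < m" for m
      using that measure_nonneg[of M] by (meson not_less order_antisym)
    have "(\<Union>m\<in>{n<..}. {\<omega>\<in>space M. N \<omega> = m}) \<in> null_sets M"
    proof (rule null_sets_UN')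
      fix m assume "m \<in> {n<..}"
      moreover have "{\<omega>\<in>space M. N \<omega> = m} \<in> sets M" by measurable
      ultimately show "{\<omega>\<in>space M. N \<omega> = m} \<in> null_sets M"
        using z by (auto simp: null_sets_def P.emeasure_eq_measure)
    qed simp
    moreover have "(\<Union>m\<in>{n<..}. {\<omega>\<in>space M. N \<omega> = m}) = {\<omega>\<in>space M. n < N \<omega>}" by auto
    ultimately have "emeasure M {\<omega>\<in>space M. n < N \<omega>} = 0" by auto
    then show False using pos by (simp add: P.emeasure_eq_measure)
  qed
  have tail_joint: "measure M {\<omega>\<in>space M. x < X 1 \<omega> \<and> n < N \<omega>} = (1 - F n) * (1 - G x) * (1 + th * F n * G x)" for n x
  proof (cases "measure M {\<omega>\<in>space M. n < N \<omega>} = 0")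
    case True
    have "measure M {\<omega>\<in>space M. x < X 1 \<omega> \<and> n < N \<omega>} \<le> measure M {\<omega>\<in>space M. n < N \<omega>}"
      by (rule P.finite_measure_mono) auto
    then have "measure M {\<omega>\<in>space M. x < X 1 \<omega> \<and> n < N \<omega>} = 0"
      using True measure_nonneg[of M "{\<omega>\<in>space M. x < X 1 \<omega> \<and> n < N \<omega>}"] by linarith
    moreover have "1 - F n = 0" using True tailN by simp
    ultimately show ?thesis by simp
  next
    case False
    then have "0 < measure M {\<omega>\<in>space M. n < N \<omega>}"
      using measure_nonneg[of M "{\<omega>\<in>space M. n < N \<omega>}"] by linarith
    from pos_exists[OF this] obtain m where m: "n < m" "0 < measure M {\<omega>\<in>space M. N \<omega> = m}" by blast
    have ex1: "\<exists>n. 1 \<le> n \<and> measure M {\<omega>\<in>space M. N \<omega> = n} > 0" using m by (intro exI[of _ m]) auto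
    have fg: "\<forall>(t::real) (x::nat \<Rightarrow> real).
           measure M {\<omega>\<in>space M. real (N \<omega>) \<le> t \<and> (\<forall>j\<in>{1..1}. X j \<omega> \<le> x j)}
         = fgm_copula 1 (\<theta> 1)
             (\<lambda>m. if m = 0 then measure M {\<omega>\<in>space M. real (N \<omega>) \<le> t}
                  else measure M {\<omega>\<in>space M. X 1 \<omega> \<le> x m})"
      using FGM[OF _ ex1] by simp
    have H: "measure M {\<omega>\<in>space M. real (N \<omega>) \<le> t \<and> X 1 \<omega> \<le> y}
        = measure M {\<omega>\<in>space M. real (N \<omega>) \<le> t} * measure M {\<omega>\<in>space M. X 1 \<omega> \<le> y} *
          (1 + th * ((1 - measure M {\<omega>\<in>space M. real (N \<omega>) \<le> t}) * (1 - measure M {\<omega>\<in>space M. X 1 \<omega> \<le> y})))" for t y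
    proof -
      have "measure M {\<omega>\<in>space M. real (N \<omega>) \<le> t \<and> (\<forall>j\<in>{1..1}. X j \<omega> \<le> (\<lambda>_. y) j)}
         = fgm_copula 1 (\<theta> 1)
             (\<lambda>m. if m = 0 then measure M {\<omega>\<in>space M. real (N \<omega>) \<le> t}
                  else measure M {\<omega>\<in>space M. X 1 \<omega> \<le> (\<lambda>_. y) m})"
        using spec[OF spec[OF fg, of t], of "\<lambda>_. y"] by simp
      then show ?thesis unfolding fgm1 th_def by simp
    qed
    show ?thesis
      using fgm_tail[OF prob N_meas X1 H, of x n] unfolding F_def G_def by simp
  qed
  define E where "E n = integral\<^sup>L M (\<lambda>\<omega>. if n < N \<omega> then X 1 \<omega> else 0)" for n
  have intE: "integrable M (\<lambda>\<omega>. if n < N \<omega> then X 1 \<omega> else 0)" for n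
  proof (rule Bochner_Integration.integrable_bound[where f="X 1"])
    show "AE \<omega> in M. norm (if n < N \<omega> then X 1 \<omega> else 0) \<le> norm (X 1 \<omega>)" by auto
  qed (use X_int in auto)
  have En: "E n = (1 - F n) * (1 - th * F n) * muX + th * F n * (1 - F n) * mu_max DX" for n
  proof -
    let ?f = "\<lambda>\<omega>. if n < N \<omega> then X 1 \<omega> else 0"
    have fm[measurable]: "?f \<in> borel_measurable M" by measurable
    have fnn: "\<And>\<omega>. \<omega> \<in> space M \<Longrightarrow> 0 \<le> ?f \<omega>" using X1nn by auto
    have "E n = integral\<^sup>L lborel (\<lambda>x. indicator {0..} x * measure M {\<omega>\<in>space M. x < ?f \<omega>})"
      unfolding E_def by (rule layer_cake(2)[OF P.finite_measure_axioms fm fnn intE])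
    also have "\<dots> = integral\<^sup>L lborel (\<lambda>x. (1 - F n) * (1 - th * F n) * (iX x * (1 - G x)) + th * F n * (1 - F n) * (iX x * (1 - G x ^ 2)))"
    proof (rule Bochner_Integration.integral_cong[OF refl])
      fix x :: real assume "x \<in> space lborel"
      show "indicator {0..} x * measure M {\<omega>\<in>space M. x < ?f \<omega>} = (1 - F n) * (1 - th * F n) * (iX x * (1 - G x)) + th * F n * (1 - F n) * (iX x * (1 - G x ^ 2))"
      proof (cases "0 \<le> x")
        case True
        then have "{\<omega>\<in>space M. x < ?f \<omega>} = {\<omega>\<in>space M. x < X 1 \<omega> \<and> n < N \<omega>}" by auto
        then have "measure M {\<omega>\<in>space M. x < ?f \<omega>} = (1 - F n) * (1 - G x) * (1 + th * F n * G x)"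
          by (simp only: tail_joint)
        with True show ?thesis unfolding iX_def
          by (simp add: power2_eq_square algebra_simps)
      qed (simp add: iX_def)
    qed
    also have "\<dots> = (1 - F n) * (1 - th * F n) * muX + th * F n * (1 - F n) * mu_max DX"
      using intX intX2 by (simp add: muX_eq maxX)
    finally show ?thesis .
  qed
  have XS[measurable]: "X (Suc n) \<in> borel_measurable M" for n using X_meas by simp
  have Enn: "0 \<le> E n" for n unfolding E_def by (rule Bochner_Integration.integral_nonneg) (use X1nn in auto)
  have sumFF: "summable (\<lambda>n. F n * (1 - F n))" by (rule sumN4)
  have E_alt: "E n = (1 - F n) * muX + (th * (mu_max DX - muX)) * (F n * (1 - F n))" for n
    unfolding En by (simp add: algebra_simps)
  have sumE: "summable E"
    unfolding E_alt by (intro summable_add summable_mult sumN sumFF summable_mult2)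
  have sumE_eq: "(\<Sum>n. E n) = muN * muX + th * (mu_max DX - muX) * (\<Sum>n. F n * (1 - F n))"
  proof -
    have "(\<Sum>n. E n) = (\<Sum>n. (1 - F n) * muX) + (\<Sum>n. (th * (mu_max DX - muX)) * (F n * (1 - F n)))"
      unfolding E_alt by (intro suminf_add[symmetric] summable_mult2 summable_mult sumN sumFF)
    also have "\<dots> = muN * muX + th * (mu_max DX - muX) * (\<Sum>n. F n * (1 - F n))"
      using suminf_mult2[OF sumN, of muX] suminf_mult[OF sumFF, of "th * (mu_max DX - muX)"]
      by (simp add: muN_eq)
    finally show ?thesis .
  qed
  have Sm: "(\<lambda>\<omega>. \<Sum>j\<in>{1..N \<omega>}. X j \<omega>) \<in> borel_measurable M"
  proof (rule measurable_compose_countable[where f="\<lambda>i \<omega>. \<Sum>j\<in>{1..i}. X j \<omega>" and g=N, OF _ N_meas])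
    fix i :: nat
    show "(\<lambda>\<omega>. \<Sum>j\<in>{1..i}. X j \<omega>) \<in> borel_measurable M"
      by (rule borel_measurable_sum) (use X_meas in auto)
  qed
  have Snn: "0 \<le> (\<Sum>j\<in>{1..N \<omega>}. X j \<omega>)" if "\<omega> \<in> space M" for \<omega>
    using X_pos that by (intro sum_nonneg) (simp add: less_imp_le)
  have nnS: "(\<integral>\<^sup>+\<omega>. ennreal (\<Sum>j\<in>{1..N \<omega>}. X j \<omega>) \<partial>M) = ennreal (\<Sum>n. E n)"
  proof -
    have "(\<integral>\<^sup>+\<omega>. ennreal (\<Sum>j\<in>{1..N \<omega>}. X j \<omega>) \<partial>M)
        = (\<integral>\<^sup>+\<omega>. (\<Sum>n. ennreal (if n < N \<omega> then X (Suc n) \<omega> else 0)) \<partial>M)"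
    proof (rule nn_integral_cong)
      fix \<omega> assume w: "\<omega> \<in> space M"
      have "(\<Sum>n. ennreal (if n < N \<omega> then X (Suc n) \<omega> else 0))
          = (\<Sum>n\<in>{..<N \<omega>}. ennreal (if n < N \<omega> then X (Suc n) \<omega> else 0))"
        by (rule suminf_finite) auto
      also have "\<dots> = (\<Sum>n\<in>{..<N \<omega>}. ennreal (X (Suc n) \<omega>))" by (intro sum.cong) auto
      also have "\<dots> = ennreal (\<Sum>n\<in>{..<N \<omega>}. X (Suc n) \<omega>)"
        using X_pos w by (intro sum_ennreal) (simp add: less_imp_le)
      also have "(\<Sum>n\<in>{..<N \<omega>}. X (Suc n) \<omega>) = (\<Sum>j\<in>{1..N \<omega>}. X j \<omega>)"
        using sum.atLeast1_atMost_eq[of "\<lambda>j. X j \<omega>" "N \<omega>"] by simp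
      finally show "ennreal (\<Sum>j\<in>{1..N \<omega>}. X j \<omega>) = (\<Sum>n. ennreal (if n < N \<omega> then X (Suc n) \<omega> else 0))" by simp
    qed
    also have "\<dots> = (\<Sum>n. \<integral>\<^sup>+\<omega>. ennreal (if n < N \<omega> then X (Suc n) \<omega> else 0) \<partial>M)"
      by (rule nn_integral_suminf) measurable
    also have "\<dots> = (\<Sum>n. ennreal (E n))"
    proof (rule suminf_cong)
      fix n
      have "(\<integral>\<^sup>+\<omega>. ennreal (if n < N \<omega> then X (Suc n) \<omega> else 0) \<partial>M)
          = (\<integral>\<^sup>+\<omega>. ennreal (if n < N \<omega> then X 1 \<omega> else 0) \<partial>M)"
      proof (cases "measure M {\<omega>\<in>space M. n < N \<omega>} = 0")
        case True
        have AE: "AE \<omega> in M. \<not> n < N \<omega>"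
        proof (rule AE_I'[of "{\<omega>\<in>space M. n < N \<omega>}"])
          have "{\<omega>\<in>space M. n < N \<omega>} \<in> sets M" by measurable
          then show "{\<omega>\<in>space M. n < N \<omega>} \<in> null_sets M"
            using True by (simp add: null_sets_def P.emeasure_eq_measure)
        qed auto
        have "(\<integral>\<^sup>+\<omega>. ennreal (if n < N \<omega> then X (Suc n) \<omega> else 0) \<partial>M) = (\<integral>\<^sup>+\<omega>. 0 \<partial>M)"
          by (rule nn_integral_cong_AE) (use AE in auto)
        moreover have "(\<integral>\<^sup>+\<omega>. ennreal (if n < N \<omega> then X 1 \<omega> else 0) \<partial>M) = (\<integral>\<^sup>+\<omega>. 0 \<partial>M)"
          by (rule nn_integral_cong_AE) (use AE in auto)
        ultimately show ?thesis by simp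
      next
        case False
        then have "0 < measure M {\<omega>\<in>space M. n < N \<omega>}"
          using measure_nonneg[of M "{\<omega>\<in>space M. n < N \<omega>}"] by linarith
        from pos_exists[OF this] obtain m where m: "n < m" "0 < measure M {\<omega>\<in>space M. N \<omega> = m}" by blast
        have ex1: "\<exists>m. Suc n \<le> m \<and> measure M {\<omega>\<in>space M. N \<omega> = m} > 0"
          using m by (intro exI[of _ m]) auto
        show ?thesis
        proof (rule exch_step[OF N_meas])
          show "\<And>j. 1 \<le> j \<Longrightarrow> X j \<in> borel_measurable M" by (rule X_meas)
          fix \<pi> :: "nat \<Rightarrow> nat" assume pi: "\<pi> permutes {1..Suc n}"
          show "distr M (count_space UNIV \<Otimes>\<^sub>M PiM {1..Suc n} (\<lambda>_. borel))
             (\<lambda>\<omega>. (N \<omega>, \<lambda>i\<in>{1..Suc n}. X (\<pi> i) \<omega>))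
            = distr M (count_space UNIV \<Otimes>\<^sub>M PiM {1..Suc n} (\<lambda>_. borel))
             (\<lambda>\<omega>. (N \<omega>, \<lambda>i\<in>{1..Suc n}. X i \<omega>))"
            by (rule exch[OF _ ex1 pi]) simp
        qed
      qed
      also have "\<dots> = ennreal (E n)"
        unfolding E_def using nn_integral_eq_integral[OF intE] X1nn by (simp add: AE_I2)
      finally show "(\<integral>\<^sup>+\<omega>. ennreal (if n < N \<omega> then X (Suc n) \<omega> else 0) \<partial>M) = ennreal (E n)" .
    qed
    also have "\<dots> = ennreal (\<Sum>n. E n)" by (rule suminf_ennreal2[OF Enn sumE])
    finally show ?thesis .
  qed
  have ES: "integral\<^sup>L M (\<lambda>\<omega>. \<Sum>j\<in>{1..N \<omega>}. X j \<omega>) = (\<Sum>n. E n)"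
    using nnS Sm Snn by (subst (asm) nn_integral_eq_integrable) (auto simp: suminf_nonneg[OF sumE Enn] AE_I2)
  have FF: "(\<Sum>n. F n * (1 - F n)) = mu_max DN - muN"
  proof -
    have "mu_max DN - muN = (\<Sum>n. (1 - F n ^ 2) - (1 - F n))"
      unfolding maxN muN_eq by (rule suminf_diff[OF sumN2 sumN])
    also have "\<dots> = (\<Sum>n. F n * (1 - F n))"
      by (intro suminf_cong) (simp add: power2_eq_square algebra_simps)
    finally show ?thesis by simp
  qed
  have minN': "mu_min DN = 2 * muN - mu_max DN"
  proof -
    have s2: "summable (\<lambda>n. 2 * (1 - F n))" using sumN by (rule summable_mult)
    have "2 * muN - mu_max DN = (\<Sum>n. 2 * (1 - F n) - (1 - F n ^ 2))"
      unfolding maxN muN_eq suminf_mult[OF sumN, symmetric] by (rule suminf_diff[OF s2 sumN2])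
    also have "\<dots> = (\<Sum>n. (1 - F n) ^ 2)"
      by (intro suminf_cong) (simp add: power2_eq_square algebra_simps)
    finally show ?thesis unfolding minN by simp
  qed
  have minX': "mu_min DX = 2 * muX - mu_max DX"
  proof -
    have "2 * muX - mu_max DX = integral\<^sup>L lborel (\<lambda>x. 2 * (iX x * (1 - G x)) - iX x * (1 - G x ^ 2))"
      unfolding muX_eq maxX using intX intX2 by simp
    also have "\<dots> = integral\<^sup>L lborel (\<lambda>x. iX x * (1 - G x) ^ 2)"
      by (intro Bochner_Integration.integral_cong refl) (simp add: power2_eq_square algebra_simps)
    finally show ?thesis unfolding minX by simp
  qed
  have ESf: "integral\<^sup>L M (\<lambda>\<omega>. \<Sum>j\<in>{1..N \<omega>}. X j \<omega>) = muN * muX + th * (mu_max DX - muX) * (mu_max DN - muN)"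
    unfolding ES sumE_eq FF ..
  show ?thesis
    unfolding Let_def DN_def[symmetric] DX_def[symmetric] muN_def[symmetric] muX_def[symmetric] th_def[symmetric] ESf
    by (simp add: minN' minX' field_simps)
qed

end
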